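(* Let $\gamma\in(0.5,1)$ and let $a:[0,\infty)\to[0,\infty)$ be a decreasing, bounded, piecewise continuous function such that $\lim_{t\to\infty}t^{\gamma}a(t)$ exists and is positive. Then for any given $\mu>0$ and $p>2$, \[ e^{-\mu\int_0^t a(s)\,ds}=o\big(t^{-\frac{p\gamma}{2}}\big)\quad (t\to\infty), \] and \[ \lim_{t\to\infty} t^{\frac{p\gamma}{2}}\int_0^t a^{\frac{p+2}{2}}(s)\,e^{-\mu\int_s^t a(r)\,dr}\,ds=\frac{\big(\lim_{t\to\infty}t^{\gamma}a(t)\big)^{\frac{p}{2}}}{\mu}. \]
   Context: $f(t)=o(g(t))$ means $\limsup_{t\to\infty}|f(t)/g(t)|=0$. *)

theory Defs
  imports "HOL-Analysis.Analysis" "HOL-Library.Landau_Symbols"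
begin

definition piecewise_continuous_nonneg :: "(real \<Rightarrow> real) \<Rightarrow> bool" where
  "piecewise_continuous_nonneg a \<longleftrightarrow>
     (\<forall>T\<ge>0. \<exists>S. finite S \<and>
        (\<forall>x\<in>{0..T} - S. continuous (at x within {0..}) a) \<and>
        (\<forall>s\<in>S \<inter> {0..T}. (\<exists>l. (a \<longlongrightarrow> l) (at_right s)) \<and>
                           (s > 0 \<longrightarrow> (\<exists>l. (a \<longlongrightarrow> l) (at_left s)))))"

end

theory Submission
  imports Defs "HOL-Real_Asymp.Real_Asymp"
begin

lemma A_deriv:
  fixes a :: "real \<Rightarrow> real"
  assumes "a integrable_on {0..T}" "finite S" "x \<in> {0<..<T} - S"
    and "continuous (at x within {0..}) a"
  shows "((\<lambda>u. integral {0..u} a) has_real_derivative a x) (at x)"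
proof -
  have c: "continuous (at x within ({0..T} - S)) a"
    by (rule continuous_within_subset[OF assms(4)]) auto
  have "((\<lambda>u. integral {0..u} a) has_vector_derivative a x) (at x within ({0..T} - S))"
    by (rule integral_has_vector_derivative_continuous_at[OF assms(1) _ assms(2) c])
       (use assms(3) in auto)
  then have "((\<lambda>u. integral {0..u} a) has_vector_derivative a x) (at x within ({0<..<T} - S))"
    by (rule has_vector_derivative_within_subset) auto
  moreover have "at x within ({0<..<T} - S) = at x"
    by (rule at_within_open) (use assms(2,3) in \<open>auto intro!: open_Diff finite_imp_closed\<close>)
  ultimately show ?thesis
    by (simp add: has_real_derivative_iff_has_vector_derivative)
qed

lemma int_anti:
  fixes a :: "real \<Rightarrow> real"
  assumes "\<forall>x y. 0 \<le> x \<and> x \<le> y \<longrightarrow> a y \<le> a x"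
  shows "a integrable_on {0..t}"
proof -
  have "mono_on {0..t} (\<lambda>x. - a x)"
    using assms by (auto simp: mono_on_def)
  then have "(\<lambda>x. - a x) integrable_on {0..t}"
    by (rule integrable_on_mono_on)
  then show ?thesis using integrable_neg by fastforce
qed

lemma asym1:
  fixes c e k :: real assumes "c > 0" "e > 0" "k > 0"
  shows "(\<lambda>t. exp (- c * t powr e)) \<in> o[at_top](\<lambda>t. t powr (- k))"
  using assms by real_asymp

lemma asym2:
  fixes c e k :: real assumes "c > 0" "e > 0" "k > 0"
  shows "filterlim (\<lambda>t. t powr (- k) * exp (c * t powr e)) at_top at_top"
  using assms by real_asymp

lemma asym3:
  fixes g :: real assumes "g < 1"
  shows "((\<lambda>t. t powr (g - 1)) \<longlongrightarrow> 0) at_top"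
  using assms by real_asymp

theorem lemma2:
  fixes a :: "real \<Rightarrow> real" and \<gamma> \<mu> p L :: real
  assumes "0.5 < \<gamma>" and "\<gamma> < 1"
    and nonneg: "\<forall>t\<ge>0. a t \<ge> 0"
    and decr: "\<forall>x y. 0 \<le> x \<and> x \<le> y \<longrightarrow> a y \<le> a x"
    and bdd: "bounded (a ` {0..})"
    and pc: "piecewise_continuous_nonneg a"
    and lim: "((\<lambda>t. t powr \<gamma> * a t) \<longlongrightarrow> L) at_top" and "L > 0"
    and "\<mu> > 0" and "p > 2"
  shows "(\<lambda>t. exp (- \<mu> * integral {0..t} a)) \<in> o[at_top](\<lambda>t. t powr (- (p * \<gamma> / 2))) \<and>
         ((\<lambda>t. t powr (p * \<gamma> / 2) *
            integral {0..t} (\<lambda>s. a s powr ((p + 2) / 2) * exp (- \<mu> * integral {s..t} a)))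
          \<longlongrightarrow> L powr (p / 2) / \<mu>) at_top"
proof -
  define q where "q = (p+2)/2"
  define k where "k = p*\<gamma>/2"
  define A where "A = (\<lambda>t. integral {0..t} a)"
  define E where "E = (\<lambda>t. exp (\<mu> * A t))"
  define f where "f = (\<lambda>s. a s powr q * E s)"
  define F where "F = (\<lambda>t. integral {0..t} f)"
  define G where "G = (\<lambda>t. t powr (-k) * E t)"
  define g where "g = (\<lambda>x. E x * (\<mu> * a x * x powr (-k) - k * x powr (-k-1)))"
  define c where "c = L powr (p/2) / \<mu>"
  have g0: "\<gamma> > 0" using assms(1) by simp
  have k0: "k > 0" using g0 \<open>p > 2\<close> by (simp add: k_def)
  have q0: "q > 0" using \<open>p > 2\<close> by (simp add: q_def)
  have inta: "\<And>t. a integrable_on {0..t}" using int_anti[OF decr] .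
  have Acomb: "integral {s..t} a = A t - A s" if "0 \<le> s" "s \<le> t" for s t
    using Henstock_Kurzweil_Integration.integral_combine[OF that inta[of t]] unfolding A_def by simp
  have Alow: "t * a t \<le> A t" if "0 \<le> t" for t
  proof -
    have "integral {0..t} (\<lambda>_. a t) \<le> integral {0..t} a"
      by (rule integral_le) (use decr inta in auto)
    then show "t * a t \<le> A t" using \<open>0 \<le> t\<close> by (simp add: A_def)
  qed
  have Acont: "continuous_on {0..t} A" for t
    unfolding A_def by (rule indefinite_integral_continuous_1[OF inta])
  have Econt: "continuous_on {0..t} E" for t
    unfolding E_def by (intro continuous_intros Acont)
  have Epos: "E t > 0" for t by (simp add: E_def)
  have evL: "eventually (\<lambda>t. t powr \<gamma> * a t > L/2) at_top"
    using lim \<open>L>0\<close> by (intro order_tendstoD) auto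
  have evA: "eventually (\<lambda>t. A t \<ge> L/2 * t powr (1-\<gamma>)) at_top"
    using evL eventually_gt_at_top[of 0]
  proof eventually_elim
    case (elim t)
    have "L/2 * t powr (1-\<gamma>) \<le> t powr (1-\<gamma>) * (t powr \<gamma> * a t)"
      using elim by (simp add: mult.commute)
    also have "\<dots> = t * a t"
      using elim by (simp add: powr_add[symmetric] mult.assoc[symmetric])
    also have "\<dots> \<le> A t" using Alow elim by auto
    finally show ?case .
  qed
  have part1: "(\<lambda>t. exp (- \<mu> * integral {0..t} a)) \<in> o[at_top](\<lambda>t. t powr (- (p * \<gamma> / 2)))"
  proof (rule landau_o.big_small_trans)
    show "(\<lambda>t. exp (- \<mu> * integral {0..t} a)) \<in> O[at_top](\<lambda>t. exp (- (\<mu>*L/2) * t powr (1-\<gamma>)))"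
    proof (rule bigoI[where c=1])
      show "eventually (\<lambda>t. norm (exp (- \<mu> * integral {0..t} a)) \<le> 1 * norm (exp (- (\<mu>*L/2) * t powr (1-\<gamma>)))) at_top"
        using evA
      proof eventually_elim
        case (elim t)
        then have "- \<mu> * integral {0..t} a \<le> - (\<mu>*L/2) * t powr (1-\<gamma>)"
          using \<open>\<mu> > 0\<close> unfolding A_def by (simp add: mult_left_mono)
        then show ?case by simp
      qed
    qed
    show "(\<lambda>t. exp (- (\<mu>*L/2) * t powr (1-\<gamma>))) \<in> o[at_top](\<lambda>t. t powr (- (p * \<gamma> / 2)))"
      by (rule asym1) (use \<open>\<mu> > 0\<close> \<open>L > 0\<close> assms(2) k0 in \<open>auto simp: k_def\<close>)
  qed
  have Ginf: "filterlim G at_top at_top"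
  proof (rule filterlim_at_top_mono[OF asym2[of "\<mu>*L/2" "1-\<gamma>" k]])
    show "\<mu>*L/2 > 0" "1 - \<gamma> > 0" "k > 0" using \<open>\<mu> > 0\<close> \<open>L > 0\<close> assms(2) k0 by auto
    show "eventually (\<lambda>t. t powr (- k) * exp (\<mu> * L / 2 * t powr (1 - \<gamma>)) \<le> G t) at_top"
      using evA eventually_gt_at_top[of 0]
    proof eventually_elim
      case (elim t)
      have "\<mu> * L / 2 * t powr (1 - \<gamma>) \<le> \<mu> * A t"
        using elim \<open>\<mu> > 0\<close> by (simp add: mult_left_mono)
      then show ?case using elim by (simp add: G_def E_def)
    qed
  qed
  have Gpos: "G t > 0" if "t > 0" for t using that Epos by (simp add: G_def)
  have Ader: "(A has_real_derivative a x) (at x)"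
    if "finite S" "x \<in> {0<..<T} - S" "continuous (at x within {0..}) a" for S T x
    unfolding A_def by (rule A_deriv[OF inta that])
  have Gder: "(G has_real_derivative g x) (at x)"
    if "finite S" "x \<in> {0<..<T} - S" "continuous (at x within {0..}) a" for S T x
  proof -
    have x0: "x > 0" using that by auto
    note hA = Ader[OF that]
    have d1: "((\<lambda>t. t powr (-k)) has_real_derivative (-k) * x powr (-k-1)) (at x)"
      using has_real_derivative_powr[OF x0, of "-k"] by simp
    have d2: "((\<lambda>t. exp (\<mu> * A t)) has_real_derivative exp (\<mu> * A x) * (\<mu> * a x)) (at x)"
      by (rule DERIV_chain2[OF DERIV_exp]) (rule DERIV_cmult[OF hA])
    have "((\<lambda>t. t powr (-k) * exp (\<mu> * A t)) has_real_derivative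
           (-k) * x powr (-k-1) * exp (\<mu> * A x) + exp (\<mu> * A x) * (\<mu> * a x) * x powr (-k)) (at x)"
      by (rule DERIV_mult[OF d1 d2])
    moreover have "(-k) * x powr (-k-1) * exp (\<mu> * A x) + exp (\<mu> * A x) * (\<mu> * a x) * x powr (-k) = g x"
      by (simp add: g_def E_def algebra_simps)
    ultimately show ?thesis unfolding G_def E_def by simp
  qed
  define b where "b = (\<lambda>x. x powr \<gamma> * a x)"
  define D where "D = (\<lambda>x. \<mu> * b x - k * x powr (\<gamma> - 1))"
  define r where "r = (\<lambda>x. b x powr q / D x)"
  have gx: "g x = E x * x powr (-k-\<gamma>) * D x" if "x > 0" for x
    using that by (simp add: g_def D_def b_def powr_diff powr_minus powr_add field_simps)
  have fg: "f x = r x * g x" if "x > 0" "D x \<noteq> 0" for x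
  proof -
    have ax: "a x = x powr (-\<gamma>) * b x"
      using that by (simp add: b_def powr_minus field_simps)
    have b0: "b x \<ge> 0" using nonneg that by (simp add: b_def)
    have "a x powr q = x powr (-\<gamma> * q) * b x powr q"
      unfolding ax using b0 by (simp add: powr_mult powr_powr)
    also have "-\<gamma> * q = -k - \<gamma>" by (simp add: q_def k_def field_simps)
    finally have aq: "a x powr q = x powr (-k-\<gamma>) * b x powr q" .
    show ?thesis using that by (simp add: f_def r_def aq gx[OF that(1)])
  qed
  have Dlim: "(D \<longlongrightarrow> \<mu> * L - k * 0) at_top"
    unfolding D_def b_def by (intro tendsto_intros lim asym3 assms(2))
  have rlim: "(r \<longlongrightarrow> c) at_top"
  proof -
    have "(r \<longlongrightarrow> L powr q / (\<mu> * L - k * 0)) at_top"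
    proof -
      have bl: "(b \<longlongrightarrow> L) at_top" using lim by (simp add: b_def)
      have "((\<lambda>x. b x powr q) \<longlongrightarrow> L powr q) at_top"
        by (rule tendsto_powr[OF bl tendsto_const]) (use \<open>L > 0\<close> in simp)
      then show ?thesis unfolding r_def
        by (rule tendsto_divide[OF _ Dlim]) (use \<open>L > 0\<close> \<open>\<mu> > 0\<close> in simp)
    qed
    moreover have "L powr q / (\<mu> * L - k * 0) = c"
      using \<open>L > 0\<close> \<open>\<mu> > 0\<close> by (simp add: c_def q_def powr_add add_divide_distrib)
    ultimately show ?thesis by simp
  qed
  have evD: "eventually (\<lambda>x. D x > 0) at_top"
    using order_tendstoD(1)[OF Dlim, of 0] \<open>L > 0\<close> \<open>\<mu> > 0\<close> by simp
  have fint: "f integrable_on {0..t}" for t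
  proof -
    have m: "mono_on {0..t} (\<lambda>x. - (a x powr q))"
      using decr nonneg q0 by (auto simp: mono_on_def intro!: powr_mono2)
    have "(\<lambda>x. - (a x powr q)) integrable_on {0..t}" by (rule integrable_on_mono_on[OF m])
    then have i1: "(\<lambda>x. a x powr q) integrable_on {0..t}" using integrable_neg by fastforce
    have "(\<lambda>x. E x * a x powr q) absolutely_integrable_on {0..t}"
      by (rule absolutely_integrable_bounded_measurable_product_real)
         (auto intro: continuous_imp_measurable_on_sets_lebesgue Econt compact_imp_bounded
            compact_continuous_image nonnegative_absolutely_integrable_1 i1)
    then show ?thesis by (simp add: f_def mult.commute absolutely_integrable_on_def)
  qed
  have main: "((\<lambda>t. F t / G t) \<longlongrightarrow> c) at_top"
  proof (rule tendstoI)
    fix e :: real assume "e > 0"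
    define \<epsilon> where "\<epsilon> = e/2"
    have "\<epsilon> > 0" using \<open>e > 0\<close> by (simp add: \<epsilon>_def)
    have "eventually (\<lambda>x. x > 0 \<and> D x > 0 \<and> dist (r x) c < \<epsilon>) at_top"
      using eventually_gt_at_top[of 0] evD tendstoD[OF rlim \<open>\<epsilon>>0\<close>] by eventually_elim auto
    then obtain T1 where T1: "\<And>x. x \<ge> T1 \<Longrightarrow> x > 0 \<and> D x > 0 \<and> dist (r x) c < \<epsilon>"
      by (auto simp: eventually_at_top_linorder)
    have T1pos: "T1 > 0" using T1[of T1] by simp
    have gpos: "g x > 0" if "x \<ge> T1" for x
      using T1[OF that] gx[of x] Epos[of x] by simp
    have bounds: "(c - \<epsilon>) * (G t - G T1) \<le> F t - F T1 \<and> F t - F T1 \<le> (c + \<epsilon>) * (G t - G T1)"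
      if "t \<ge> T1" for t
    proof -
      have "t \<ge> 0" using that T1pos by simp
      then obtain S where S: "finite S" "\<forall>x\<in>{0..t} - S. continuous (at x within {0..}) a"
        using pc unfolding piecewise_continuous_nonneg_def by blast
      have hg: "(g has_integral G t - G T1) {T1..t}"
      proof (rule fundamental_theorem_of_calculus_interior_strong[OF S(1) that])
        fix x assume x: "x \<in> {T1<..<t} - S"
        have "(G has_real_derivative g x) (at x)"
          by (rule Gder[OF S(1), of x t]) (use x T1pos S(2) in auto)
        then show "(G has_vector_derivative g x) (at x)"
          by (simp add: has_real_derivative_iff_has_vector_derivative)
      next
        show "continuous_on {T1..t} G" unfolding G_def
          by (intro continuous_intros continuous_on_subset[OF Econt[of t]]) (use T1pos in auto)
      qed
      have hf: "(f has_integral F t - F T1) {T1..t}"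
      proof -
        have "f integrable_on {T1..t}"
          by (rule integrable_subinterval_real[OF fint[of t]]) (use T1pos in auto)
        moreover have "F T1 + integral {T1..t} f = F t"
          unfolding F_def
          by (rule Henstock_Kurzweil_Integration.integral_combine[OF _ that fint]) (use T1pos in auto)
        ultimately show ?thesis by (metis add_diff_cancel_left' has_integral_integrable_integral)
      qed
      have pt: "(c - \<epsilon>) * g x \<le> f x \<and> f x \<le> (c + \<epsilon>) * g x" if "x \<in> {T1..t}" for x
      proof -
        from T1[of x] that have x: "x>0" "D x > 0" "dist (r x) c < \<epsilon>" by auto
        have gp: "g x > 0" using gpos that by auto
        have "r x < c + \<epsilon>" "r x > c - \<epsilon>" using x(3) by (auto simp: dist_real_def abs_less_iff)
        then have "r x * g x \<le> (c + \<epsilon>) * g x" "(c - \<epsilon>) * g x \<le> r x * g x"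
          using gp by (auto intro!: mult_right_mono)
        then show ?thesis using fg[of x] x by simp
      qed
      show ?thesis
        using has_integral_le[OF has_integral_mult_right[OF hg, of "c-\<epsilon>"] hf]
          has_integral_le[OF hf has_integral_mult_right[OF hg, of "c+\<epsilon>"]] pt by auto
    qed
    define K where "K = \<bar>F T1 - c * G T1\<bar> + \<epsilon> * \<bar>G T1\<bar>"
    show "eventually (\<lambda>t. dist (F t / G t) c < e) at_top"
      using eventually_ge_at_top[of T1] Ginf[unfolded filterlim_at_top_dense, rule_format, of "K/\<epsilon>"]
        Ginf[unfolded filterlim_at_top_dense, rule_format, of 0]
    proof eventually_elim
      case (elim t)
      have Gt: "G t > 0" using elim by simp
      have "K < \<epsilon> * G t" using elim \<open>\<epsilon> > 0\<close> by (simp add: field_simps)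
      moreover have "\<bar>F t - c * G t\<bar> \<le> K + \<epsilon> * G t"
        using bounds[OF elim(1)] \<open>\<epsilon> > 0\<close> mult_pos_pos[OF \<open>\<epsilon> > 0\<close> Gt]
          mult_pos_pos[OF \<open>\<epsilon> > 0\<close> Gpos[OF T1pos]] unfolding K_def
        by (auto simp: abs_le_iff algebra_simps abs_if split: if_splits)
      ultimately have "\<bar>F t - c * G t\<bar> < e * G t" by (simp add: \<epsilon>_def)
      moreover have "F t / G t - c = (F t - c * G t) / G t" using Gt by (simp add: field_simps)
      ultimately show ?case using Gt by (simp add: dist_real_def pos_divide_less_eq)
    qed
  qed
  have eq: "eventually (\<lambda>t. F t / G t = t powr (p*\<gamma>/2) *
      integral {0..t} (\<lambda>s. a s powr ((p+2)/2) * exp (-\<mu> * integral {s..t} a))) at_top"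
    using eventually_gt_at_top[of 0]
  proof eventually_elim
    case (elim t)
    have "integral {0..t} (\<lambda>s. a s powr ((p+2)/2) * exp (-\<mu> * integral {s..t} a)) =
          integral {0..t} (\<lambda>s. exp (-\<mu> * A t) * f s)"
    proof (rule integral_cong)
      fix s assume "s \<in> {0..t}"
      then have "integral {s..t} a = A t - A s" using Acomb by auto
      moreover have "exp (-\<mu> * (A t - A s)) = exp (-\<mu> * A t) * exp (\<mu> * A s)"
        by (subst mult_exp_exp) (simp add: algebra_simps)
      ultimately show "a s powr ((p+2)/2) * exp (-\<mu> * integral {s..t} a) = exp (-\<mu> * A t) * f s"
        by (simp add: f_def E_def q_def)
    qed
    also have "\<dots> = exp (-\<mu> * A t) * F t" by (simp add: F_def)
    finally show ?case using elim
      by (simp add: G_def E_def k_def powr_minus exp_minus field_simps)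
  qed
  have part2: "((\<lambda>t. t powr (p * \<gamma> / 2) *
            integral {0..t} (\<lambda>s. a s powr ((p + 2) / 2) * exp (- \<mu> * integral {s..t} a)))
          \<longlongrightarrow> L powr (p / 2) / \<mu>) at_top"
    using Lim_transform_eventually[OF main eq] by (simp add: c_def)
  show ?thesis using part1 part2 by simp
qed

end
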